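(* Let $R$ be an associative ring with identity and let $e_1, e_2$ be idempotents of $R$ with $e_1 \sim_i e_2$. Then there is an automorphism of $R$ sending $e_1$ to $e_2$.
   Context: Let $\gamma(R)$ be the directed graph whose vertices are the idempotents of $R$, with an edge $f \to g$ if and only if $fg = 0$; $f$ is then called an in-neighbour of $g$. For idempotents $e, e'$, write $e \sim_i e'$ if they have the same set of in-neighbours in $\gamma(R)$, i.e. for every idempotent $f \in R$, $fe = 0 \iff fe' = 0$. *)

theory Defs
  imports Main
begin

definition idempotent :: "'a::ring_1 \<Rightarrow> bool" where
  "idempotent e \<longleftrightarrow> e * e = e"

text \<open>Edge f -> g in the directed idempotent graph: f g = 0.
In-neighbours of g: idempotents f with f g = 0.\<close>
definition in_neighbours :: "'a::ring_1 \<Rightarrow> 'a set" where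
  "in_neighbours g = {f. idempotent f \<and> f * g = 0}"

definition in_equiv :: "'a::ring_1 \<Rightarrow> 'a \<Rightarrow> bool" where
  "in_equiv e e' \<longleftrightarrow> in_neighbours e = in_neighbours e'"

definition ring_automorphism :: "('a::ring_1 \<Rightarrow> 'a) \<Rightarrow> bool" where
  "ring_automorphism \<phi> \<longleftrightarrow> bij \<phi> \<and> (\<forall>x y. \<phi> (x + y) = \<phi> x + \<phi> y)
     \<and> (\<forall>x y. \<phi> (x * y) = \<phi> x * \<phi> y) \<and> \<phi> 1 = 1"

end

theory Submission
  imports Defs
begin

theorem mainTheorem8:
  fixes e1 e2 :: "'a::ring_1"
  assumes "idempotent e1" and "idempotent e2" and "in_equiv e1 e2"
  shows "\<exists>\<phi>. ring_automorphism \<phi> \<and> \<phi> e1 = e2"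
proof -
  have i1: "e1 * e1 = e1" and i2: "e2 * e2 = e2" using assms(1,2) by (auto simp: idempotent_def)
  have N: "in_neighbours e1 = in_neighbours e2" using assms(3) by (simp add: in_equiv_def)
  have "idempotent (1 - e1)" using i1 by (simp add: idempotent_def algebra_simps)
  moreover have "(1 - e1) * e1 = 0" using i1 by (simp add: algebra_simps)
  ultimately have "(1 - e1) \<in> in_neighbours e2" using N by (auto simp: in_neighbours_def)
  hence h12: "e1 * e2 = e2" by (simp add: in_neighbours_def algebra_simps)
  have "idempotent (1 - e2)" using i2 by (simp add: idempotent_def algebra_simps)
  moreover have "(1 - e2) * e2 = 0" using i2 by (simp add: algebra_simps)
  ultimately have "(1 - e2) \<in> in_neighbours e1" using N by (auto simp: in_neighbours_def)
  hence h21: "e2 * e1 = e1" by (simp add: in_neighbours_def algebra_simps)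
  define a where "a = e2 - e1"
  have aa: "a * a = 0" unfolding a_def using i1 i2 h12 h21 by (simp add: algebra_simps)
  have ae: "a * e1 = 0" unfolding a_def using i1 h21 by (simp add: algebra_simps)
  have ea: "e1 * a = a" unfolding a_def using i1 h12 by (simp add: algebra_simps)
  have u1: "(1 + a) * (1 - a) = 1" using aa by (simp add: algebra_simps)
  have u2: "(1 - a) * (1 + a) = 1" using aa by (simp add: algebra_simps)
  define \<phi> where "\<phi> x = (1 - a) * x * (1 + a)" for x
  define \<psi> where "\<psi> x = (1 + a) * x * (1 - a)" for x
  have c1: "\<phi> (\<psi> x) = x" for x
  proof -
    have "\<phi> (\<psi> x) = ((1 - a) * (1 + a)) * x * ((1 - a) * (1 + a))"
      by (simp add: \<phi>_def \<psi>_def mult.assoc)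
    thus ?thesis using u1 u2 by simp
  qed
  have c2: "\<psi> (\<phi> x) = x" for x
  proof -
    have "\<psi> (\<phi> x) = ((1 + a) * (1 - a)) * x * ((1 + a) * (1 - a))"
      by (simp add: \<phi>_def \<psi>_def mult.assoc)
    thus ?thesis using u1 u2 by simp
  qed
  have bij: "bij \<phi>" by (rule o_bij[of \<psi>]) (auto simp: c1 c2)
  have add: "\<phi> (x + y) = \<phi> x + \<phi> y" for x y by (simp add: \<phi>_def algebra_simps)
  have mul: "\<phi> (x * y) = \<phi> x * \<phi> y" for x y
  proof -
    have "\<phi> x * \<phi> y = (1 - a) * x * ((1 + a) * (1 - a)) * y * (1 + a)"
      by (simp add: \<phi>_def mult.assoc)
    thus ?thesis using u1 by (simp add: \<phi>_def mult.assoc)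
  qed
  have one: "\<phi> 1 = 1" using u2 by (simp add: \<phi>_def)
  have "\<phi> e1 = (e1 - a * e1) * (1 + a)" by (simp add: \<phi>_def algebra_simps)
  also have "\<dots> = e1 + a" using ae ea by (simp add: algebra_simps)
  also have "\<dots> = e2" by (simp add: a_def)
  finally have "\<phi> e1 = e2" .
  thus ?thesis using bij add mul one unfolding ring_automorphism_def by blast
qed

end
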